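(* Let $c,d,s$ be positive integers with $c,d\le s$. Let $E$ be an $s\times s$ random matrix uniformly distributed over $\mathbb{F}_q^{s\times s}$, and let $F$ and $G$ be arbitrary (fixed) full-rank matrices of sizes $c\times s$ and $s\times d$, respectively. Then $$H_q(FE\mid EG)\ge cs-cd.$$
   Context: $\mathbb{F}_q$ is a finite field with $q$ elements; $H_q$ denotes Shannon (conditional) entropy with logarithm base $q$. *)

theory Defs
  imports "Jordan_Normal_Form.DL_Rank" "HOL-Probability.Probability_Mass_Function"
begin

definition cond_entropy_pmf ::
  "real \<Rightarrow> 'w pmf \<Rightarrow> ('w \<Rightarrow> 'x) \<Rightarrow> ('w \<Rightarrow> 'y) \<Rightarrow> real" where
  "cond_entropy_pmf b p X Y =
     - (\<Sum>xy \<in> (\<lambda>w. (X w, Y w)) ` set_pmf p.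
          let pxy = measure_pmf.prob p {w. X w = fst xy \<and> Y w = snd xy};
              py  = measure_pmf.prob p {w. Y w = snd xy}
          in pxy * log b (pxy / py))"

end

theory Submission
  imports Defs
begin

lemma card_carrier_mat_aux:
  "bij_betw (\<lambda>A. restrict (\<lambda>(i,j). A $$ (i,j)) ({0..<n}\<times>{0..<m}))
     (carrier_mat n m :: 'a mat set) (PiE ({0..<n}\<times>{0..<m}) (\<lambda>_. UNIV))"
proof (rule bij_betwI[where g = "\<lambda>f. Matrix.mat n m f"])
  show "(\<lambda>A. restrict (\<lambda>(i,j). A $$ (i,j)) ({0..<n}\<times>{0..<m})) \<in> carrier_mat n m \<rightarrow> PiE ({0..<n}\<times>{0..<m}) (\<lambda>_. UNIV)"
    by auto
  show "(\<lambda>f. Matrix.mat n m f) \<in> PiE ({0..<n}\<times>{0..<m}) (\<lambda>_. UNIV) \<rightarrow> (carrier_mat n m :: 'a mat set)"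
    by auto
  show "Matrix.mat n m (restrict (\<lambda>(i,j). A $$ (i,j)) ({0..<n}\<times>{0..<m})) = A" if "A \<in> carrier_mat n m" for A :: "'a mat"
    using that by (intro eq_matI) auto
  show "restrict (\<lambda>(i,j). Matrix.mat n m f $$ (i,j)) ({0..<n}\<times>{0..<m}) = f" if "f \<in> PiE ({0..<n}\<times>{0..<m}) (\<lambda>_. (UNIV :: 'a set))" for f
    using that by (auto simp: PiE_def extensional_def restrict_def fun_eq_iff)
qed

lemma card_carrier_mat:
  "card (carrier_mat n m :: 'a::finite mat set) = CARD('a) ^ (n*m)"
proof -
  have "card (carrier_mat n m :: 'a mat set) = card (PiE ({0..<n}\<times>{0..<m}) (\<lambda>_. UNIV :: 'a set))"
    using bij_betw_same_card[OF card_carrier_mat_aux] .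
  also have "\<dots> = CARD('a) ^ (n*m)" by (simp add: card_PiE)
  finally show ?thesis .
qed

lemma fin_carrier_mat: "finite (carrier_mat n m :: 'a::finite mat set)"
proof -
  have "finite (PiE ({0..<n}\<times>{0..<m}) (\<lambda>_. UNIV :: 'a set))" by (simp add: finite_PiE)
  then show ?thesis using bij_betw_finite[OF card_carrier_mat_aux] by blast
qed

lemma right_inverse_ex:
  fixes F :: "'a :: field mat"
  assumes F: "F \<in> carrier_mat c s" and r: "vec_space.rank c F = c"
  shows "\<exists>R \<in> carrier_mat s c. F * R = 1\<^sub>m c"
proof -
  interpret V: vec_space "TYPE('a)" c .
  have "\<exists>A. finite A \<and> maximal A (\<lambda>T. T \<subseteq> set (cols F) \<and> V.lin_indpt T) \<and> {} \<subseteq> A"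
    by (rule maximal_exists_superset[of "set (cols F)"]) (auto simp: V.lin_dep_def)
  then obtain S where S: "finite S" "maximal S (\<lambda>T. T \<subseteq> set (cols F) \<and> V.lin_indpt T)"
    by blast
  have cS: "card S = c" using V.rank_card_indpt[OF F S(2)] r by simp
  have Ssub: "S \<subseteq> set (cols F)" using S(2) unfolding maximal_def by blast
  have Sli: "V.lin_indpt S" using S(2) unfolding maximal_def by blast
  have Scar: "S \<subseteq> carrier_vec c" using Ssub F cols_dim by blast
  have "V.basis S"
    by (rule V.dim_li_is_basis) (use S cS Scar Ssub Sli in \<open>auto simp: V.dim_is_n\<close>)
  then have "V.span S = carrier_vec c" unfolding V.basis_def by simp
  moreover have "V.span S \<subseteq> V.span (set (cols F))"
    by (rule V.span_is_monotone[OF Ssub])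
  moreover have "V.span (set (cols F)) \<subseteq> carrier_vec c"
  proof -
    have "set (cols F) \<subseteq> carrier_vec c" using F cols_dim by blast
    then show ?thesis using V.span_is_subset2 by simp
  qed
  ultimately have sp: "V.col_space F = carrier_vec c" unfolding V.col_space_def by auto
  have "\<forall>j<c. \<exists>x\<in>carrier_vec s. F *\<^sub>v x = unit_vec c j"
  proof (intro allI impI)
    fix j assume "j < c"
    then have "unit_vec c j \<in> V.col_space F" using sp by simp
    then show "\<exists>x\<in>carrier_vec s. F *\<^sub>v x = unit_vec c j"
      unfolding V.col_space_eq[OF F] using F by auto
  qed
  then obtain x where x: "\<And>j. j < c \<Longrightarrow> x j \<in> carrier_vec s \<and> F *\<^sub>v x j = unit_vec c j"
    by metis
  define R where "R = Matrix.mat s c (\<lambda>(i,j). x j $ i)"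
  have R: "R \<in> carrier_mat s c" unfolding R_def by simp
  have colR: "col R j = x j" if "j < c" for j
    using x[OF that] that unfolding R_def by (intro eq_vecI) auto
  have "F * R = 1\<^sub>m c"
  proof (rule eq_matI)
    fix i j assume ij: "i < dim_row (1\<^sub>m c :: 'a mat)" "j < dim_col (1\<^sub>m c :: 'a mat)"
    then have "(F * R) $$ (i, j) = Matrix.row F i \<bullet> col R j" using F R by simp
    also have "\<dots> = (F *\<^sub>v x j) $ i" using ij F colR by simp
    also have "\<dots> = unit_vec c j $ i" using x ij by simp
    also have "\<dots> = 1\<^sub>m c $$ (i, j)" using ij by simp
    finally show "(F * R) $$ (i, j) = 1\<^sub>m c $$ (i, j)" .
  qed (use F R in auto)
  then show ?thesis using R by blast
qed


lemma add_mat_cancel_left: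
  fixes A B C :: "'a :: ab_group_add mat"
  assumes "A \<in> carrier_mat n m" "B \<in> carrier_mat n m" "C \<in> carrier_mat n m" "A + B = A + C"
  shows "B = C"
proof (rule eq_matI)
  fix i j assume ij: "i < dim_row C" "j < dim_col C"
  have "(A + B) $$ (i,j) = (A + C) $$ (i,j)" using assms(4) by simp
  then show "B $$ (i,j) = C $$ (i,j)" using assms(1-3) ij by simp
qed (use assms in auto)

lemma add_mat_cancel_right:
  fixes A B C :: "'a :: ab_group_add mat"
  assumes "A \<in> carrier_mat n m" "B \<in> carrier_mat n m" "C \<in> carrier_mat n m" "B + A = C + A"
  shows "B = C"
proof (rule eq_matI)
  fix i j assume ij: "i < dim_row C" "j < dim_col C"
  have "(B + A) $$ (i,j) = (C + A) $$ (i,j)" using assms(4) by simp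
  then show "B $$ (i,j) = C $$ (i,j)" using assms(1-3) ij by simp
qed (use assms in auto)

lemma kernel_bound:
  fixes G :: "'a :: {finite, field} mat"
  assumes G: "G \<in> carrier_mat s d"
  shows "CARD('a) ^ (c * s) \<le> CARD('a) ^ (c * d) * card {M \<in> carrier_mat c s. M * G = 0\<^sub>m c d}"
proof -
  define K where "K = {M \<in> carrier_mat c s. M * G = 0\<^sub>m c d}"
  define rep where "rep z = (SOME M. M \<in> carrier_mat c s \<and> M * G = z)" for z
  have rep: "rep (M * G) \<in> carrier_mat c s \<and> rep (M * G) * G = M * G" if "M \<in> carrier_mat c s" for M
    unfolding rep_def by (rule someI[of _ M]) (use that in auto)
  define f where "f M = (M * G, M - rep (M * G))" for M
  have "inj_on f (carrier_mat c s)"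
  proof (rule inj_onI)
    fix M M' assume M: "M \<in> carrier_mat c s" and M': "M' \<in> carrier_mat c s" and eq: "f M = f M'"
    then have 1: "M * G = M' * G" and 2: "M - rep (M * G) = M' - rep (M' * G)" unfolding f_def by auto
    have r: "rep (M * G) \<in> carrier_mat c s" using rep[OF M] by blast
    have "M - rep (M * G) = M' - rep (M * G)" using 2 1 by simp
    then have "M - rep (M * G) + rep (M * G) = M' - rep (M * G) + rep (M * G)" by simp
    moreover have "M - rep (M * G) + rep (M * G) = M" using M r by (intro eq_matI) auto
    moreover have "M' - rep (M * G) + rep (M * G) = M'" using M' r by (intro eq_matI) auto
    ultimately show "M = M'" by simp
  qed
  moreover have "f ` carrier_mat c s \<subseteq> carrier_mat c d \<times> K"
  proof
    fix p assume "p \<in> f ` carrier_mat c s"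
    then obtain M where M: "M \<in> carrier_mat c s" and p: "p = f M" by blast
    have r: "rep (M * G) \<in> carrier_mat c s" "rep (M * G) * G = M * G" using rep[OF M] by blast+
    have "(M - rep (M * G)) * G = M * G - rep (M * G) * G"
      by (rule minus_mult_distrib_mat[OF M r(1) G])
    also have "\<dots> = 0\<^sub>m c d" unfolding r(2) using M G by (intro eq_matI) auto
    finally show "p \<in> carrier_mat c d \<times> K" unfolding p f_def K_def using M G r by auto
  qed
  moreover have "finite ((carrier_mat c d :: 'a mat set) \<times> K)"
  proof -
    have "finite K" unfolding K_def by (rule finite_subset[OF _ fin_carrier_mat[of c s]]) auto
    then show ?thesis by (rule finite_cartesian_product[OF fin_carrier_mat])
  qed
  ultimately have "card (carrier_mat c s :: 'a mat set) \<le> card ((carrier_mat c d :: 'a mat set) \<times> K)"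
    by (intro card_inj_on_le)
  then show ?thesis unfolding K_def[symmetric] by (simp add: card_cartesian_product card_carrier_mat)
qed

lemma fiber_bound:
  fixes F G R :: "'a :: {finite, field} mat"
  assumes F: "F \<in> carrier_mat c s" and G: "G \<in> carrier_mat s d" and R: "R \<in> carrier_mat s c"
    and FR: "F * R = 1\<^sub>m c" and x: "x \<in> carrier_mat c s"
  shows "card {M \<in> carrier_mat c s. M * G = 0\<^sub>m c d} * card {E \<in> carrier_mat s s. F * E = x \<and> E * G = y}
    \<le> card {E \<in> carrier_mat s s. E * G = y}"
proof -
  define K where "K = {M \<in> carrier_mat c s. M * G = 0\<^sub>m c d}"
  define B where "B = {E \<in> carrier_mat s s. F * E = x \<and> E * G = y}"
  define A where "A = {E \<in> carrier_mat s s. E * G = y}"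
  define f where "f p = snd p + R * fst p" for p :: "'a mat \<times> 'a mat"
  have FE: "F * (E + R * M) = x + M" if "M \<in> K" "E \<in> B" for M E
  proof -
    have M: "M \<in> carrier_mat c s" and E: "E \<in> carrier_mat s s" and FEx: "F * E = x"
      using that unfolding K_def B_def by auto
    have "F * (E + R * M) = F * E + F * (R * M)"
      using F E R M by (intro mult_add_distrib_mat) auto
    also have "F * (R * M) = (F * R) * M" using F R M by simp
    also have "\<dots> = M" using FR M by simp
    finally show ?thesis using FEx by simp
  qed
  have "inj_on f (K \<times> B)"
  proof (rule inj_onI)
    fix p p' assume p: "p \<in> K \<times> B" and p': "p' \<in> K \<times> B" and eq: "f p = f p'"
    obtain M E where pe: "p = (M, E)" by fastforce
    obtain M' E' where pe': "p' = (M', E')" by fastforce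
    have MK: "M \<in> K" "E \<in> B" "M' \<in> K" "E' \<in> B" using p p' pe pe' by auto
    have M: "M \<in> carrier_mat c s" "M' \<in> carrier_mat c s" and E: "E \<in> carrier_mat s s" "E' \<in> carrier_mat s s"
      using MK unfolding K_def B_def by auto
    have e: "E + R * M = E' + R * M'" using eq pe pe' f_def by simp
    have "x + M = x + M'" using FE[OF MK(1,2)] FE[OF MK(3,4)] e by simp
    then have "M = M'" using add_mat_cancel_left[OF x M] by blast
    then have "E = E'" using add_mat_cancel_right[OF _ E, of "R * M"] e R M by auto
    then show "p = p'" using pe pe' \<open>M = M'\<close> by simp
  qed
  moreover have "f ` (K \<times> B) \<subseteq> A"
  proof
    fix z assume "z \<in> f ` (K \<times> B)"
    then obtain M E where ME: "M \<in> K" "E \<in> B" and z: "z = E + R * M" unfolding f_def by auto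
    have M: "M \<in> carrier_mat c s" "M * G = 0\<^sub>m c d" and E: "E \<in> carrier_mat s s" "E * G = y"
      using ME unfolding K_def B_def by auto
    have "(E + R * M) * G = E * G + (R * M) * G"
      using E R M G by (intro add_mult_distrib_mat) auto
    also have "(R * M) * G = R * (M * G)" using R M G by simp
    also have "\<dots> = 0\<^sub>m s d" using M R by (simp add: right_mult_zero_mat)
    also have "E * G + 0\<^sub>m s d = E * G" using E(1) G by simp
    finally show "z \<in> A" unfolding A_def z using E R M by auto
  qed
  moreover have "finite A" unfolding A_def by (rule finite_subset[OF _ fin_carrier_mat[of s s]]) auto
  ultimately have "card (K \<times> B) \<le> card A" by (intro card_inj_on_le)
  then show ?thesis unfolding K_def[symmetric] B_def[symmetric] A_def[symmetric]
    by (simp add: card_cartesian_product)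
qed


theorem lemma1:
  fixes c d s :: nat
    and F G :: "'a :: {finite, field} mat"
  assumes "0 < c" and "0 < d" and "0 < s"
    and "c \<le> s" and "d \<le> s"
    and "F \<in> carrier_mat c s" and "G \<in> carrier_mat s d"
    and "vec_space.rank c F = c"
    and "vec_space.rank s G = d"
  shows "cond_entropy_pmf (real CARD('a)) (pmf_of_set (carrier_mat s s))
           (\<lambda>E. F * E) (\<lambda>E. E * G)
         \<ge> real c * real s - real c * real d"
proof -
  let ?q = "real CARD('a)"
  have Fc: "F \<in> carrier_mat c s" and Gc: "G \<in> carrier_mat s d" using assms by auto
  define \<Omega> where "\<Omega> = (carrier_mat s s :: 'a mat set)"
  define p where "p = pmf_of_set \<Omega>"
  define g where "g = (\<lambda>E::'a mat. (F * E, E * G))"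
  define P where "P xy = measure_pmf.prob p {w. F * w = fst xy \<and> w * G = snd xy}" for xy
  define PY where "PY xy = measure_pmf.prob p {w. w * G = snd xy}" for xy :: "'a mat \<times> 'a mat"
  have fin\<Omega>: "finite \<Omega>" unfolding \<Omega>_def by (rule fin_carrier_mat)
  have ne\<Omega>: "\<Omega> \<noteq> {}" unfolding \<Omega>_def using zero_carrier_mat[of s s] by blast
  have setp: "set_pmf p = \<Omega>" unfolding p_def using fin\<Omega> ne\<Omega> by simp
  obtain R where R: "R \<in> carrier_mat s c" "F * R = 1\<^sub>m c" using right_inverse_ex[OF Fc assms(8)] by blast
  define Kc where "Kc = card {M \<in> carrier_mat c s. M * G = 0\<^sub>m c d}"
  have Kb: "CARD('a) ^ (c * s) \<le> CARD('a) ^ (c * d) * Kc" using kernel_bound[OF Gc] Kc_def by simp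
  have q2: "2 \<le> CARD('a)"
  proof -
    have "card {0::'a, 1} = 2" by simp
    moreover have "card {0::'a, 1} \<le> CARD('a)" by (rule card_mono) auto
    ultimately show ?thesis by simp
  qed
  have q1: "1 < ?q" using q2 by simp
  have card\<Omega>: "0 < card \<Omega>" using fin\<Omega> ne\<Omega> by (simp add: card_gt_0_iff)
  have key: "P xy * log ?q (P xy / PY xy) \<le> P xy * (real c * real d - real c * real s)"
    if xy: "xy \<in> g ` set_pmf p" for xy
  proof -
    obtain E0 where E0: "E0 \<in> \<Omega>" and xyE: "xy = (F * E0, E0 * G)" using xy setp g_def by auto
    define B where "B = {E \<in> carrier_mat s s. F * E = F * E0 \<and> E * G = E0 * G}"
    define A where "A = {E \<in> carrier_mat s s. E * G = E0 * G}"
    have finB: "finite B" unfolding B_def by (rule finite_subset[OF _ fin_carrier_mat[of s s]]) auto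
    have finA: "finite A" unfolding A_def by (rule finite_subset[OF _ fin_carrier_mat[of s s]]) auto
    have E0c: "E0 \<in> carrier_mat s s" using E0 \<Omega>_def by simp
    have EB: "E0 \<in> B" unfolding B_def using E0c by simp
    have EA: "E0 \<in> A" unfolding A_def using E0c by simp
    have "card B \<noteq> 0" using finB EB by auto
    then have cB: "1 \<le> card B" by simp
    have FE0: "F * E0 \<in> carrier_mat c s" using Fc E0c by simp
    have fb: "Kc * card B \<le> card A"
      using fiber_bound[OF Fc Gc R(1) R(2) FE0, of "E0 * G"] unfolding Kc_def A_def B_def by simp
    have PB: "P xy = real (card B) / real (card \<Omega>)"
    proof -
      have "P xy = real (card (\<Omega> \<inter> {w. F * w = F * E0 \<and> w * G = E0 * G})) / real (card \<Omega>)"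
        unfolding P_def p_def xyE using fin\<Omega> ne\<Omega> by (simp add: measure_pmf_of_set)
      also have "\<Omega> \<inter> {w. F * w = F * E0 \<and> w * G = E0 * G} = B" unfolding B_def \<Omega>_def by auto
      finally show ?thesis .
    qed
    have PA: "PY xy = real (card A) / real (card \<Omega>)"
    proof -
      have "PY xy = real (card (\<Omega> \<inter> {w. w * G = E0 * G})) / real (card \<Omega>)"
        unfolding PY_def p_def xyE using fin\<Omega> ne\<Omega> by (simp add: measure_pmf_of_set)
      also have "\<Omega> \<inter> {w. w * G = E0 * G} = A" unfolding A_def \<Omega>_def by auto
      finally show ?thesis .
    qed
    have "card A \<noteq> 0" using finA EA by auto
    then have cApos: "0 < card A" by simp
    have ratio: "P xy / PY xy = real (card B) / real (card A)"
      unfolding PB PA using card\<Omega> by (simp add: field_simps)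
    have nat_ineq: "card B * CARD('a) ^ (c * s) \<le> CARD('a) ^ (c * d) * card A"
    proof -
      have "card B * CARD('a) ^ (c * s) \<le> card B * (CARD('a) ^ (c * d) * Kc)"
        using Kb by simp
      also have "\<dots> = CARD('a) ^ (c * d) * (Kc * card B)" by simp
      also have "\<dots> \<le> CARD('a) ^ (c * d) * card A" using fb by simp
      finally show ?thesis .
    qed
    then have real_ineq: "real (card B) * ?q ^ (c * s) \<le> ?q ^ (c * d) * real (card A)"
      by (metis of_nat_le_iff of_nat_mult of_nat_power)
    have qpos: "0 < ?q ^ (c * s)" using q1 by simp
    have r1: "real (card B) / real (card A) \<le> ?q ^ (c * d) / ?q ^ (c * s)"
      using real_ineq qpos cApos by (simp add: field_simps)
    also have "\<dots> = ?q powr (real (c * d) - real (c * s))"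
    proof -
      have a: "?q powr real (c * d) = ?q ^ (c * d)" using q1 by (intro powr_realpow) simp
      have b: "?q powr real (c * s) = ?q ^ (c * s)" using q1 by (intro powr_realpow) simp
      show ?thesis unfolding powr_diff a b ..
    qed
    finally have r2: "P xy / PY xy \<le> ?q powr (real (c * d) - real (c * s))" using ratio by simp
    have ppos: "0 < P xy / PY xy" unfolding ratio using cB cApos by simp
    have "log ?q (P xy / PY xy) \<le> log ?q (?q powr (real (c * d) - real (c * s)))"
      using r2 ppos q1 by (subst log_le_cancel_iff) auto
    also have "\<dots> = real c * real d - real c * real s" using q1 by simp
    finally have "log ?q (P xy / PY xy) \<le> real c * real d - real c * real s" .
    moreover have "0 \<le> P xy" unfolding P_def by simp
    ultimately show ?thesis by (rule mult_left_mono)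
  qed
  have sum1: "(\<Sum>xy \<in> g ` set_pmf p. P xy) = 1"
  proof -
    have "P xy = pmf (map_pmf g p) xy" for xy
    proof -
      have "g -` {xy} = {w. F * w = fst xy \<and> w * G = snd xy}" unfolding g_def by (cases xy) auto
      then show ?thesis unfolding P_def by (simp add: pmf_map)
    qed
    then have "(\<Sum>xy \<in> g ` set_pmf p. P xy) = (\<Sum>xy \<in> g ` set_pmf p. pmf (map_pmf g p) xy)" by simp
    also have "\<dots> = 1" by (rule sum_pmf_eq_1) (use fin\<Omega> setp in auto)
    finally show ?thesis .
  qed
  have "(\<Sum>xy \<in> g ` set_pmf p. P xy * log ?q (P xy / PY xy))
        \<le> (\<Sum>xy \<in> g ` set_pmf p. P xy * (real c * real d - real c * real s))"
    by (rule sum_mono) (rule key)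
  also have "\<dots> = (\<Sum>xy \<in> g ` set_pmf p. P xy) * (real c * real d - real c * real s)"
    by (simp add: sum_distrib_right)
  also have "\<dots> = real c * real d - real c * real s" using sum1 by simp
  finally have main: "(\<Sum>xy \<in> g ` set_pmf p. P xy * log ?q (P xy / PY xy)) \<le> real c * real d - real c * real s" .
  have "cond_entropy_pmf ?q (pmf_of_set (carrier_mat s s)) (\<lambda>E. F * E) (\<lambda>E. E * G)
        = - (\<Sum>xy \<in> g ` set_pmf p. P xy * log ?q (P xy / PY xy))"
    unfolding cond_entropy_pmf_def Let_def P_def PY_def g_def p_def \<Omega>_def by simp
  then show ?thesis using main by simp
qed

end
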